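(* Let $(A,\circ)$ be a permutative algebra and let $(A[[\hbar]],\triangleright_{\hbar},\triangleleft_{\hbar})$ be a diassociative formal deformation of $A$, given by bilinear operations $\triangleright_i,\triangleleft_i:A\otimes A\to A$ ($i\geq 0$). Define a bilinear operation $[\cdot,\cdot]:A\otimes A\to A$ by $[x,y]=x\triangleright_1 y-y\triangleleft_1 x$ for all $x,y\in A$. Then $(A,\circ,[\cdot,\cdot])$ is a dual pre-Poisson algebra.
   Context: Work over a field $\mathbb{F}$ of characteristic $0$. A permutative algebra is a vector space with a bilinear product $\circ$ satisfying $x\circ(y\circ z)=(x\circ y)\circ z=(y\circ x)\circ z$. A dialgebra (diassociative algebra) over a commutative ring is a module with two associative bilinear products $\triangleright,\triangleleft$ satisfying $(x\triangleleft y)\triangleleft z=x\triangleleft(y\triangleright z)$, $(x\triangleright y)\triangleleft z=x\triangleright(y\triangleleft z)$, $(x\triangleleft y)\triangleright z=x\triangleright(y\triangleright z)$. A diassociative formal deformation of a permutative algebra $(A,\circ)$ is a sequence of bilinear operations $\triangleright_i,\triangleleft_i:A\otimes A\to A$, $i\geq0$, with $x\triangleright_0 y:=x\circ y=:y\triangleleft_0 x$ for all $x,y\in A$, such that $(A[[\hbar]],\triangleright_\hbar,\triangleleft_\hbar)$ is a dialgebra over $\mathbb{F}[[\hbar]]$, where $\triangleright_\hbar,\triangleleft_\hbar$ are the $\mathbb{F}[[\hbar]]$-bilinear operations determined by $x\triangleright_\hbar y=\sum_{i\ge0}(x\triangleright_i y)\hbar^i$ and $x\triangleleft_\hbar y=\sum_{i\ge0}(x\triangleleft_i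 y)\hbar^i$ for $x,y\in A$. A dual pre-Poisson algebra is a vector space $A$ with bilinear operations $\circ,[\cdot,\cdot]$ such that $(A,\circ)$ is permutative, $[x,[y,z]]=[[x,y],z]+[y,[x,z]]$, $[x,y\circ z]=[x,y]\circ z+y\circ[x,z]$, $[x\circ y,z]=x\circ[y,z]+y\circ[x,z]$ and $[x,y]\circ z=-[y,x]\circ z$ for all $x,y,z$. *)

theory Defs
  imports Complex_Main
begin

definition bilinear_op :: "('k::field \<Rightarrow> 'a::ab_group_add \<Rightarrow> 'a) \<Rightarrow> ('a \<Rightarrow> 'a \<Rightarrow> 'a) \<Rightarrow> bool" where
  "bilinear_op scale f \<longleftrightarrow>
     (\<forall>x. Vector_Spaces.linear scale scale (\<lambda>y. f x y)) \<and> (\<forall>y. Vector_Spaces.linear scale scale (\<lambda>x. f x y))"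

definition permutative_algebra :: "('k::field \<Rightarrow> 'a::ab_group_add \<Rightarrow> 'a) \<Rightarrow> ('a \<Rightarrow> 'a \<Rightarrow> 'a) \<Rightarrow> bool" where
  "permutative_algebra scale m \<longleftrightarrow> vector_space scale \<and> bilinear_op scale m \<and>
     (\<forall>x y z. m x (m y z) = m (m x y) z \<and> m (m x y) z = m (m y x) z)"

text \<open>Formal power series A[[h]] are represented as coefficient sequences nat => A.
  Given bilinear operations op_i (i >= 0), the induced F[[h]]-bilinear operation on A[[h]]
  determined by  x op_h y = sum_i (x op_i y) h^i  for x, y in A is the Cauchy-type product
  (X op_h Y)_n = sum over i+j+k = n of (X_i op_k Y_j).\<close>
definition hbar_op :: "(nat \<Rightarrow> 'a \<Rightarrow> 'a \<Rightarrow> 'a::comm_monoid_add) \<Rightarrow> (nat \<Rightarrow> 'a) \<Rightarrow> (nat \<Rightarrow> 'a) \<Rightarrow> (nat \<Rightarrow> 'a)" where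
  "hbar_op op X Y n = (\<Sum>i\<le>n. \<Sum>j\<le>n - i. op (n - i - j) (X i) (Y j))"

definition dialgebra_axioms :: "('b \<Rightarrow> 'b \<Rightarrow> 'b) \<Rightarrow> ('b \<Rightarrow> 'b \<Rightarrow> 'b) \<Rightarrow> bool" where
  "dialgebra_axioms r l \<longleftrightarrow>
     (\<forall>x y z. r (r x y) z = r x (r y z)) \<and>
     (\<forall>x y z. l (l x y) z = l x (l y z)) \<and>
     (\<forall>x y z. l (l x y) z = l x (r y z)) \<and>
     (\<forall>x y z. l (r x y) z = r x (l y z)) \<and>
     (\<forall>x y z. r (l x y) z = r x (r y z))"

definition diassociative_formal_deformation ::
  "('k::field \<Rightarrow> 'a::ab_group_add \<Rightarrow> 'a) \<Rightarrow> ('a \<Rightarrow> 'a \<Rightarrow> 'a) \<Rightarrow>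
   (nat \<Rightarrow> 'a \<Rightarrow> 'a \<Rightarrow> 'a) \<Rightarrow> (nat \<Rightarrow> 'a \<Rightarrow> 'a \<Rightarrow> 'a) \<Rightarrow> bool" where
  "diassociative_formal_deformation scale m R L \<longleftrightarrow>
     (\<forall>i. bilinear_op scale (R i) \<and> bilinear_op scale (L i)) \<and>
     (\<forall>x y. R 0 x y = m x y \<and> L 0 y x = m x y) \<and>
     dialgebra_axioms (hbar_op R) (hbar_op L)"

definition dual_pre_Poisson :: "('k::field \<Rightarrow> 'a::ab_group_add \<Rightarrow> 'a) \<Rightarrow> ('a \<Rightarrow> 'a \<Rightarrow> 'a) \<Rightarrow> ('a \<Rightarrow> 'a \<Rightarrow> 'a) \<Rightarrow> bool" where
  "dual_pre_Poisson scale m b \<longleftrightarrow> permutative_algebra scale m \<and> bilinear_op scale b \<and>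
     (\<forall>x y z. b x (b y z) = b (b x y) z + b y (b x z)) \<and>
     (\<forall>x y z. b x (m y z) = m (b x y) z + m y (b x z)) \<and>
     (\<forall>x y z. b (m x y) z = m x (b y z) + m y (b x z)) \<and>
     (\<forall>x y z. m (b x y) z = - m (b y x) z)"

end

theory Submission
  imports Defs "HOL-Library.Function_Algebras"
begin

lemma add_diff_gen:
  fixes f :: "'a::ab_group_add \<Rightarrow> 'b::ab_group_add"
  assumes "\<And>x y. f (x + y) = f x + f y"
  shows "f (x - y) = f x - f y"
proof -
  have "f x = f ((x - y) + y)" by simp
  also have "\<dots> = f (x - y) + f y" by (rule assms)
  finally show ?thesis by (simp add: algebra_simps)
qed

lemma bil_props:
  assumes "bilinear_op s f"
  shows "f (x + y) z = f x z + f y z" "f x (y + z) = f x y + f x z"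
    "f (x - y) z = f x z - f y z" "f x (y - z) = f x y - f x z"
    "f 0 z = 0" "f x 0 = 0"
proof -
  have l: "\<And>x y z. f x (y + z) = f x y + f x z" "\<And>x y z. f (x + y) z = f x z + f y z"
  proof -
    fix x y z
    have "Vector_Spaces.linear s s (f x)" "Vector_Spaces.linear s s (\<lambda>x. f x z)"
      using assms unfolding bilinear_op_def by auto
    then show "f x (y + z) = f x y + f x z" "f (x + y) z = f x z + f y z"
      unfolding Vector_Spaces.linear_iff by auto
  qed
  show "f (x + y) z = f x z + f y z" "f x (y + z) = f x y + f x z" using l by auto
  show "f (x - y) z = f x z - f y z" using add_diff_gen[of "\<lambda>x. f x z"] l by auto
  show "f x (y - z) = f x y - f x z" using add_diff_gen[of "\<lambda>y. f x y"] l by auto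
  show "f 0 z = 0" using add_diff_gen[of "\<lambda>x. f x z" 0 0] l by auto
  show "f x 0 = 0" using add_diff_gen[of "\<lambda>y. f x y" 0 0] l by auto
qed

definition dl :: "'a::zero \<Rightarrow> nat \<Rightarrow> 'a" where
  "dl x = (\<lambda>n. if n = 0 then x else 0)"

lemma hbar_right:
  fixes op :: "nat \<Rightarrow> 'a::ab_group_add \<Rightarrow> 'a \<Rightarrow> 'a"
  assumes "\<And>k a. op k a 0 = 0"
  shows "hbar_op op X (dl z) n = (\<Sum>i\<le>n. op (n - i) (X i) z)"
proof -
  have h: "\<And>i k. (\<Sum>j\<le>k. op (k - j) (X i) (dl z j)) = op k (X i) z"
  proof -
    fix i k
    have "(\<Sum>j\<le>k. op (k - j) (X i) (dl z j)) = (\<Sum>j\<le>k. if j = 0 then op (k - j) (X i) z else 0)"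
      by (rule sum.cong) (auto simp: dl_def assms)
    also have "\<dots> = op k (X i) z" by (simp add: sum.delta)
    finally show "(\<Sum>j\<le>k. op (k - j) (X i) (dl z j)) = op k (X i) z" .
  qed
  show ?thesis unfolding hbar_op_def by (intro sum.cong refl) (rule h)
qed

lemma hbar_left:
  fixes op :: "nat \<Rightarrow> 'a::ab_group_add \<Rightarrow> 'a \<Rightarrow> 'a"
  assumes "\<And>k a. op k 0 a = 0"
  shows "hbar_op op (dl x) Y n = (\<Sum>j\<le>n. op (n - j) x (Y j))"
proof -
  have "hbar_op op (dl x) Y n = (\<Sum>i\<le>n. if i = 0 then (\<Sum>j\<le>n - i. op (n - i - j) x (Y j)) else 0)"
    unfolding hbar_op_def by (rule sum.cong) (auto simp: dl_def assms)
  also have "\<dots> = (\<Sum>j\<le>n. op (n - j) x (Y j))" by (simp add: sum.delta)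
  finally show ?thesis .
qed

lemma hbar_dd:
  fixes op :: "nat \<Rightarrow> 'a::ab_group_add \<Rightarrow> 'a \<Rightarrow> 'a"
  assumes "\<And>k a. op k a 0 = 0" "\<And>k a. op k 0 a = 0"
  shows "hbar_op op (dl x) (dl y) = (\<lambda>n. op n x y)"
proof
  fix n
  have "hbar_op op (dl x) (dl y) n = (\<Sum>j\<le>n. if j = 0 then op (n - j) x y else 0)"
    unfolding hbar_left[of op, OF assms(2)] by (rule sum.cong) (auto simp: dl_def assms)
  then show "hbar_op op (dl x) (dl y) n = op n x y" by (simp add: sum.delta)
qed

lemma hbar_diff1:
  fixes op :: "nat \<Rightarrow> 'a::ab_group_add \<Rightarrow> 'a \<Rightarrow> 'a"
  assumes "\<And>k a b c. op k (a - b) c = op k a c - op k b c"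
  shows "hbar_op op (X - Y) Z = hbar_op op X Z - hbar_op op Y Z"
  unfolding hbar_op_def fun_eq_iff by (simp add: assms sum_subtractf)

lemma hbar_diff2:
  fixes op :: "nat \<Rightarrow> 'a::ab_group_add \<Rightarrow> 'a \<Rightarrow> 'a"
  assumes "\<And>k a b c. op k c (a - b) = op k c a - op k c b"
  shows "hbar_op op Z (X - Y) = hbar_op op Z X - hbar_op op Z Y"
  unfolding hbar_op_def fun_eq_iff by (simp add: assms sum_subtractf)

lemma leibniz_abstract:
  fixes r l :: "'b::ab_group_add \<Rightarrow> 'b \<Rightarrow> 'b"
  assumes ax: "dialgebra_axioms r l"
    and r1: "\<And>a b c. r (a - b) c = r a c - r b c" and r2: "\<And>a b c. r c (a - b) = r c a - r c b"
    and l1: "\<And>a b c. l (a - b) c = l a c - l b c" and l2: "\<And>a b c. l c (a - b) = l c a - l c b"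
  shows "r X (r Y Z - l Z Y) - l (r Y Z - l Z Y) X =
     (r (r X Y - l Y X) Z - l Z (r X Y - l Y X)) + (r Y (r X Z - l Z X) - l (r X Z - l Z X) Y)"
proof -
  have a1: "\<And>x y z. r (r x y) z = r x (r y z)" and a2: "\<And>x y z. l (l x y) z = l x (l y z)"
    and a3: "\<And>x y z. l (l x y) z = l x (r y z)" and a4: "\<And>x y z. l (r x y) z = r x (l y z)"
    and a5: "\<And>x y z. r (l x y) z = r x (r y z)" using ax unfolding dialgebra_axioms_def by auto
  show ?thesis
    by (simp add: r1 r2 l1 l2 a1 a2[symmetric] a3[symmetric] a4[symmetric] a5 algebra_simps)
qed

lemma sum1: "(\<Sum>i\<le>(1::nat). f i) = f 0 + f 1" by (simp add: atMost_Suc add_ac)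
lemma sum2: "(\<Sum>i\<le>(2::nat). f i) = f 0 + f 1 + f 2" by (simp add: atMost_Suc numeral_2_eq_2 add_ac)

lemma comb3a:
  fixes p q :: "'a::ab_group_add"
  assumes "a1 = b1" "a2 = b2" "a3 = b3" "p - q = - (a1 - b1) + (a2 - b2) - (a3 - b3)"
  shows "p = q"
  using assms by simp

lemma comb3b:
  fixes p q :: "'a::ab_group_add"
  assumes "a1 = b1" "a2 = b2" "a3 = b3" "p - q = (a1 - b1) - (a2 - b2) + (a3 - b3)"
  shows "p = q"
  using assms by simp

lemma comb4:
  fixes p q :: "'a::ab_group_add"
  assumes "a1 = b1" "a2 = b2" "a3 = b3" "a4 = b4"
    "p - q = (a1 - b1) - (a2 - b2) + (a3 - b3) - (a4 - b4)"
  shows "p = q"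
  using assms by simp

theorem theorem2p25:
  fixes scale :: "'k::field_char_0 \<Rightarrow> 'a::ab_group_add \<Rightarrow> 'a"
    and m :: "'a \<Rightarrow> 'a \<Rightarrow> 'a"
    and R L :: "nat \<Rightarrow> 'a \<Rightarrow> 'a \<Rightarrow> 'a"
  assumes "permutative_algebra scale m"
    and "diassociative_formal_deformation scale m R L"
  shows "dual_pre_Poisson scale m (\<lambda>x y. R 1 x y - L 1 y x)"
proof -
  have vs: "vector_space scale" and bm: "bilinear_op scale m"
    using assms(1) unfolding permutative_algebra_def by auto
  have bR: "\<And>i. bilinear_op scale (R i)" and bL: "\<And>i. bilinear_op scale (L i)"
    and R0: "\<And>x y. R 0 x y = m x y" and L0: "\<And>x y. L 0 y x = m x y"
    and dia: "dialgebra_axioms (hbar_op R) (hbar_op L)"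
    using assms(2) unfolding diassociative_formal_deformation_def by auto
  note Rp = bil_props[OF bR] and Lp = bil_props[OF bL] and mp = bil_props[OF bm]
  have a1: "\<And>x y z. hbar_op R (hbar_op R x y) z = hbar_op R x (hbar_op R y z)"
    and a2: "\<And>x y z. hbar_op L (hbar_op L x y) z = hbar_op L x (hbar_op L y z)"
    and a3: "\<And>x y z. hbar_op L (hbar_op L x y) z = hbar_op L x (hbar_op R y z)"
    and a4: "\<And>x y z. hbar_op L (hbar_op R x y) z = hbar_op R x (hbar_op L y z)"
    and a5: "\<And>x y z. hbar_op R (hbar_op L x y) z = hbar_op R x (hbar_op R y z)"
    using dia unfolding dialgebra_axioms_def by auto
  note hs = hbar_dd[of R, OF Rp(6) Rp(5)] hbar_dd[of L, OF Lp(6) Lp(5)]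
    hbar_right[of R, OF Rp(6)] hbar_right[of L, OF Lp(6)]
    hbar_left[of R, OF Rp(5)] hbar_left[of L, OF Lp(5)] sum1 sum2 R0 L0
  have A1: "\<And>x y z. R 1 (m x y) z + m (R 1 x y) z = R 1 x (m y z) + m x (R 1 y z)"
  proof -
    fix x y z
    show "?thesis x y z" using fun_cong[OF a1[of "dl x" "dl y" "dl z"], of 1] by (simp add: hs)
  qed
  have A2: "\<And>x y z. L 1 (m y x) z + m z (L 1 x y) = L 1 x (m z y) + m (L 1 y z) x"
  proof -
    fix x y z
    show "?thesis x y z" using fun_cong[OF a2[of "dl x" "dl y" "dl z"], of 1] by (simp add: hs)
  qed
  have A3: "\<And>x y z. L 1 (m y x) z + m z (L 1 x y) = L 1 x (m y z) + m (R 1 y z) x"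
  proof -
    fix x y z
    show "?thesis x y z" using fun_cong[OF a3[of "dl x" "dl y" "dl z"], of 1] by (simp add: hs)
  qed
  have A4: "\<And>x y z. L 1 (m x y) z + m z (R 1 x y) = R 1 x (m z y) + m x (L 1 y z)"
  proof -
    fix x y z
    show "?thesis x y z" using fun_cong[OF a4[of "dl x" "dl y" "dl z"], of 1] by (simp add: hs)
  qed
  have A5: "\<And>x y z. R 1 (m y x) z + m (L 1 x y) z = R 1 x (m y z) + m x (R 1 y z)"
  proof -
    fix x y z
    show "?thesis x y z" using fun_cong[OF a5[of "dl x" "dl y" "dl z"], of 1] by (simp add: hs)
  qed
  have J: "\<And>x y z. R 1 x (R 1 y z - L 1 z y) - L 1 (R 1 y z - L 1 z y) x =
     (R 1 (R 1 x y - L 1 y x) z - L 1 z (R 1 x y - L 1 y x)) + (R 1 y (R 1 x z - L 1 z x) - L 1 (R 1 x z - L 1 z x) y)"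
  proof -
    fix x y z
    have "hbar_op R (dl x) (hbar_op R (dl y) (dl z) - hbar_op L (dl z) (dl y)) -
          hbar_op L (hbar_op R (dl y) (dl z) - hbar_op L (dl z) (dl y)) (dl x) =
     (hbar_op R (hbar_op R (dl x) (dl y) - hbar_op L (dl y) (dl x)) (dl z) - hbar_op L (dl z) (hbar_op R (dl x) (dl y) - hbar_op L (dl y) (dl x))) +
     (hbar_op R (dl y) (hbar_op R (dl x) (dl z) - hbar_op L (dl z) (dl x)) - hbar_op L (hbar_op R (dl x) (dl z) - hbar_op L (dl z) (dl x)) (dl y))"
      by (rule leibniz_abstract[OF dia]) (simp_all add: hbar_diff1 hbar_diff2 Rp Lp)
    from fun_cong[OF this, of 2] show "?thesis x y z"
      by (simp add: hs Rp Lp)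
  qed
  have bil: "bilinear_op scale (\<lambda>x y. R 1 x y - L 1 y x)"
  proof -
    have lR: "\<And>x. Vector_Spaces.linear scale scale (R 1 x)" "\<And>y. Vector_Spaces.linear scale scale (\<lambda>x. R 1 x y)"
      and lL: "\<And>x. Vector_Spaces.linear scale scale (L 1 x)" "\<And>y. Vector_Spaces.linear scale scale (\<lambda>x. L 1 x y)"
      using bR[of 1] bL[of 1] unfolding bilinear_op_def by auto
    have sc: "\<And>c a b. scale c a - scale c b = scale c (a - b)"
      using module.scale_right_diff_distrib[OF vs[unfolded module_iff_vector_space[symmetric]]] by simp
    show ?thesis unfolding bilinear_op_def Vector_Spaces.linear_iff
      using lR lL vs unfolding Vector_Spaces.linear_iff by (auto simp: sc Rp Lp)
  qed
  have T2: "\<And>x y z. R 1 x (m y z) - L 1 (m y z) x = m (R 1 x y - L 1 y x) z + m y (R 1 x z - L 1 z x)"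
  proof -
    fix x y z
    show "?thesis x y z"
      by (rule comb3a[OF A1[where x=x and y=y and z=z] A5[where x=y and y=x and z=z] A4[where x=y and y=z and z=x]])
        (simp add: mp algebra_simps)
  qed
  have T3: "\<And>x y z. R 1 (m x y) z - L 1 z (m x y) = m x (R 1 y z - L 1 z y) + m y (R 1 x z - L 1 z x)"
  proof -
    fix x y z
    show "?thesis x y z"
      by (rule comb3b[OF A1[where x=x and y=y and z=z] A4[where x=x and y=z and z=y] A3[where x=z and y=x and z=y]])
        (simp add: mp algebra_simps)
  qed
  have T4: "\<And>x y z. m (R 1 x y - L 1 y x) z = - m (R 1 y x - L 1 x y) z"
  proof -
    fix x y z
    show "?thesis x y z"
      by (rule comb4[OF A1[where x=x and y=y and z=z] A5[where x=x and y=y and z=z] A1[where x=y and y=x and z=z] A5[where x=y and y=x and z=z]])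
        (simp add: mp algebra_simps)
  qed
  show ?thesis unfolding dual_pre_Poisson_def
    apply (intro conjI allI)
         apply (rule assms(1))
        apply (rule bil)
       apply (rule J)
      apply (rule T2)
     apply (rule T3)
    apply (rule T4)
    done
qed

end
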